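(* Let $\star\in\{T,L,R\}$ and suppose that a pair $(\mathfrak m,\mathfrak m^* )$ of complex-valued functions on the edges of the subgraph $S^\star$ is ICSH and has ICRBV (in $S^\star$). Then $$\int_{\gamma^\star_y}\big(\mathfrak m(z)\hat\psi(z)\,dz+\mathfrak m^*(z)\hat\psi^*(z)\,d\bar z\big)=\int_{\gamma^\star_0}\big(\mathfrak m(z)\hat\psi(z)\,dz+\mathfrak m^*(z)\hat\psi^*(z)\,d\bar z\big)$$ for every $y\in\mathbb Z_{\ge0}$ if $\star=T$, and for every $y\in\mathbb Z_{\le0}$ if $\star\in\{L,R\}$.
   Context: Fix integers $a<0<b$, $C=\{a,\dots,b\}$, $C^*=\{a+\frac12,\dots,b-\frac12\}$. $\tilde V$ has orthonormal basis $(e_\rho)_{\rho\in\{\pm1\}^C}$; for $x'\in C^*$, $\varsigma_{x'}(\rho)$ flips signs of $\rho_x$, $x<x'$; $\psi_{x'}e_\rho=\frac{-\rho_{x'-1/2}+i\rho_{x'+1/2}}{\sqrt2}e_{\varsigma_{x'}(\rho)}$, $\psi^*_{x'}e_\rho=\frac{-i\rho_{x'-1/2}+\rho_{x'+1/2}}{\sqrt2}e_{\varsigma_{x'}(\rho)}$; $\mathrm{CliffGen}$ is their span. With $\beta=\frac12\log(\sqrt2+1)$: $T_h^{1/2}$ diagonal with entries $\exp(\frac\beta2\sum_{x=a}^{b-1}\rho_x\rho_{x+1})$; $e_\tau^\dagger T_ve_\rho=\exp(\beta\sum_x\rho_x\tau_x)\delta_{\tau_a\rho_a}\delta_{\tau_b\rho_b}$;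 $e_\tau^\dagger T^{slit}_ve_\rho=\exp(\beta\sum_x\rho_x\tau_x)\delta_{\tau_a\rho_a}\delta_{\tau_0\rho_0}\delta_{\tau_b\rho_b}$; $T=T_h^{1/2}T_vT_h^{1/2}$, $T^{slit}=T_h^{1/2}T^{slit}_vT_h^{1/2}$. The lattice slit-strip is the multigraph with vertices $C\times\mathbb Z\subset\mathbb C$, nearest-neighbour edges (identified with midpoints), with each edge between $-iy$ and $-i(y+1)$ ($y\ge0$) doubled into a left-side ($0^-$) and right-side ($0^+$) copy; faces adjacent to the slit use the copy on their side. Its subgraphs are $S^T=\{a,\dots,b\}\times\mathbb Z_{\ge0}$, $S^L=\{a,\dots,0\}\times\mathbb Z_{\le0}$, $S^R=\{0,\dots,b\}\times\mathbb Z_{\le0}$ with the corresponding edges of the slit-strip. Left boundary edges: vertical edges on $x=a$ and right-side slit edges; right boundary edges: vertical edges on $x=b$ and left-side slit edges. The fermions $\hat\psi,\hat\psi^*$ are the unique functions from the edges of the slit-strip to $\mathrm{CliffGen}$ with $\hat\psi(x'+iy)=T^{-y}\psi_{x'}T^y$, $\hat\psi^*(x'+iy)=T^{-y}\psi^*_{x'}T^y$, $\hat\psi(x'-iy)=(T^{slit})^y\psi_{x'}(T^{slit})^{-y}$, $\hat\psi^*(x'-iy)=(T^{slit})^y\psi^*_{x'}(T^{slit})^{-y}$ ($y\ge0$) on horizontal edges and satisfying: for edges $z_1,z_2$ adjacent to a common vertex $v$ and face $p$, $\hat\psi(z_1)+\frac{i|v-p|}{v-p}\hat\psi^*(z_1)=\hat\psi(z_2)+\frac{i|v-p|}{v-p}\hat\psi^*(z_2)$;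 $\hat\psi(L)+i\hat\psi^*(L)=0$ and $\hat\psi(R)-i\hat\psi^*(R)=0$ on left/right boundary edges. Contours: $\gamma^T_y=(a+iy,\dots,b+iy)$ ($y\ge0$), $\gamma^L_y=(a+iy,\dots,0+iy)$, $\gamma^R_y=(0+iy,\dots,b+iy)$ ($y\le0$); integrals: $\int(\mathfrak m\hat\psi\,dz+\mathfrak m^*\hat\psi^*\,d\bar z)=\sum_j(\mathfrak m(z_j)\hat\psi(z_j)(w_j-w_{j-1})+\mathfrak m^*(z_j)\hat\psi^*(z_j)\overline{(w_j-w_{j-1})})$ over consecutive vertices $w_{j-1},w_j$ with joining edge $z_j$. ICSH in $S^\star$: for edges $z_1,z_2$ of $S^\star$ adjacent to a common vertex $v$ and face $p$ of $S^\star$, $\mathfrak m(z_1)-\frac{i|v-p|}{v-p}\mathfrak m^*(z_1)=\mathfrak m(z_2)-\frac{i|v-p|}{v-p}\mathfrak m^*(z_2)$. ICRBV in $S^\star$: $\mathfrak m(L)-i\mathfrak m^*(L)=0$ and $\mathfrak m(R)+i\mathfrak m^*(R)=0$ for all left/right boundary edges $L,R$ of $S^\star$ (for $S^L$ the right boundary is the left side of the slit, for $S^R$ the left boundary is the right side of the slit). *)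

theory Defs
  imports Complex_Main
begin

text \<open>Spin configurations rho in {+1,-1}^C, C = {a..b}, encoded as int-valued
functions that are +1 or -1 on C and constantly 1 outside C.  A linear operator
on the space V with orthonormal basis e_rho is encoded by its matrix:
A tau rho = e_tau^dagger A e_rho.\<close>

definition configs :: "int \<Rightarrow> int \<Rightarrow> (int \<Rightarrow> int) set" where
  "configs a b = {\<rho>. \<forall>x. (x \<in> {a..b} \<longrightarrow> \<rho> x \<in> {-1, 1}) \<and> (x \<notin> {a..b} \<longrightarrow> \<rho> x = 1)}"

type_synonym op = "(int \<Rightarrow> int) \<Rightarrow> (int \<Rightarrow> int) \<Rightarrow> complex"

definition mmul :: "int \<Rightarrow> int \<Rightarrow> op \<Rightarrow> op \<Rightarrow> op" where
  "mmul a b A B = (\<lambda>\<tau> \<rho>. \<Sum>\<sigma>\<in>configs a b. A \<tau> \<sigma> * B \<sigma> \<rho>)"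

definition mid :: "int \<Rightarrow> int \<Rightarrow> op" where
  "mid a b = (\<lambda>\<tau> \<rho>. if \<tau> = \<rho> \<and> \<rho> \<in> configs a b then 1 else 0)"

fun mpow :: "int \<Rightarrow> int \<Rightarrow> op \<Rightarrow> nat \<Rightarrow> op" where
  "mpow a b A 0 = mid a b"
| "mpow a b A (Suc n) = mmul a b A (mpow a b A n)"

definition minv :: "int \<Rightarrow> int \<Rightarrow> op \<Rightarrow> op" where
  "minv a b A = (SOME B. (\<forall>\<tau> \<rho>. B \<tau> \<rho> \<noteq> 0 \<longrightarrow> \<tau> \<in> configs a b \<and> \<rho> \<in> configs a b)
                        \<and> mmul a b A B = mid a b \<and> mmul a b B A = mid a b)"

definition osc :: "complex \<Rightarrow> op \<Rightarrow> op" where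
  "osc c A = (\<lambda>\<tau> \<rho>. c * A \<tau> \<rho>)"

definition oadd :: "op \<Rightarrow> op \<Rightarrow> op" where
  "oadd A B = (\<lambda>\<tau> \<rho>. A \<tau> \<rho> + B \<tau> \<rho>)"

definition ozero :: op where
  "ozero = (\<lambda>\<tau> \<rho>. 0)"

text \<open>The dual point x' = k + 1/2 of C* (with a \<le> k < b) is indexed by the integer k.
varsigma_{x'} flips the spins rho_x for x < x', i.e. for a \<le> x \<le> k.\<close>

definition flip :: "int \<Rightarrow> int \<Rightarrow> (int \<Rightarrow> int) \<Rightarrow> (int \<Rightarrow> int)" where
  "flip a k \<rho> = (\<lambda>x. if a \<le> x \<and> x \<le> k then - \<rho> x else \<rho> x)"

definition psi :: "int \<Rightarrow> int \<Rightarrow> int \<Rightarrow> op" where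
  "psi a b k = (\<lambda>\<tau> \<rho>. if \<rho> \<in> configs a b \<and> \<tau> = flip a k \<rho>
      then (- of_int (\<rho> k) + \<i> * of_int (\<rho> (k+1))) / complex_of_real (sqrt 2) else 0)"

definition psis :: "int \<Rightarrow> int \<Rightarrow> int \<Rightarrow> op" where
  "psis a b k = (\<lambda>\<tau> \<rho>. if \<rho> \<in> configs a b \<and> \<tau> = flip a k \<rho>
      then (- \<i> * of_int (\<rho> k) + of_int (\<rho> (k+1))) / complex_of_real (sqrt 2) else 0)"

definition cliffgen :: "int \<Rightarrow> int \<Rightarrow> op set" where
  "cliffgen a b = {A. \<exists>c d. A = (\<lambda>\<tau> \<rho>. \<Sum>k\<in>{a..<b}. c k * psi a b k \<tau> \<rho> + d k * psis a b k \<tau> \<rho>)}"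

definition beta_c :: real where
  "beta_c = ln (sqrt 2 + 1) / 2"

definition Th_half :: "int \<Rightarrow> int \<Rightarrow> op" where
  "Th_half a b = (\<lambda>\<tau> \<rho>. if \<tau> = \<rho> \<and> \<rho> \<in> configs a b
      then complex_of_real (exp (beta_c / 2 * (\<Sum>x\<in>{a..<b}. real_of_int (\<rho> x * \<rho> (x+1))))) else 0)"

definition Tv :: "int \<Rightarrow> int \<Rightarrow> op" where
  "Tv a b = (\<lambda>\<tau> \<rho>. if \<tau> \<in> configs a b \<and> \<rho> \<in> configs a b \<and> \<tau> a = \<rho> a \<and> \<tau> b = \<rho> b
      then complex_of_real (exp (beta_c * (\<Sum>x\<in>{a..b}. real_of_int (\<rho> x * \<tau> x)))) else 0)"

definition Tv_slit :: "int \<Rightarrow> int \<Rightarrow> op" where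
  "Tv_slit a b = (\<lambda>\<tau> \<rho>. if \<tau> \<in> configs a b \<and> \<rho> \<in> configs a b \<and> \<tau> a = \<rho> a \<and> \<tau> 0 = \<rho> 0 \<and> \<tau> b = \<rho> b
      then complex_of_real (exp (beta_c * (\<Sum>x\<in>{a..b}. real_of_int (\<rho> x * \<tau> x)))) else 0)"

definition Tmat :: "int \<Rightarrow> int \<Rightarrow> op" where
  "Tmat a b = mmul a b (Th_half a b) (mmul a b (Tv a b) (Th_half a b))"

definition Tslit :: "int \<Rightarrow> int \<Rightarrow> op" where
  "Tslit a b = mmul a b (Th_half a b) (mmul a b (Tv_slit a b) (Th_half a b))"

text \<open>An edge is identified with its midpoint, together with a tag distinguishing
the two copies (left side 0^-: SL, right side 0^+: SR) of each slit edge; all other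
edges carry the tag Mid.\<close>

datatype side = Mid | SL | SR

type_synonym edge = "complex \<times> side"

definition hedge :: "int \<Rightarrow> int \<Rightarrow> edge" where
  "hedge k y = (Complex (of_int k + 1/2) (of_int y), Mid)"   \<comment> \<open>edge from k+iy to k+1+iy\<close>

definition vedge :: "int \<Rightarrow> int \<Rightarrow> side \<Rightarrow> edge" where
  "vedge x y s = (Complex (of_int x) (of_int y + 1/2), s)"  \<comment> \<open>edge from x+iy to x+i(y+1)\<close>

definition strip_edges :: "int \<Rightarrow> int \<Rightarrow> edge set" where
  "strip_edges a b =
     {hedge k y | k y. a \<le> k \<and> k < b}
   \<union> {vedge x y Mid | x y. a \<le> x \<and> x \<le> b \<and> \<not> (x = 0 \<and> y < 0)}
   \<union> {vedge 0 y s | y s. y < 0 \<and> s \<in> {SL, SR}}"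

text \<open>Faces: the face (k,j) has centre (k+1/2)+i(j+1/2), a \<le> k < b.  Its corner (dx,dy),
dx,dy in {0,1}, is the vertex (k+dx)+i(j+dy); the two edges of the face at this corner are
the horizontal edge and the vertical edge below.  A face adjacent to the slit uses the
copy of the slit edge on its own side.\<close>

definition face_centre :: "int \<Rightarrow> int \<Rightarrow> complex" where
  "face_centre k j = Complex (of_int k + 1/2) (of_int j + 1/2)"

definition corner_vertex :: "int \<Rightarrow> int \<Rightarrow> int \<Rightarrow> int \<Rightarrow> complex" where
  "corner_vertex k j dx dy = Complex (of_int (k + dx)) (of_int (j + dy))"

definition corner_hedge :: "int \<Rightarrow> int \<Rightarrow> int \<Rightarrow> int \<Rightarrow> edge" where
  "corner_hedge k j dx dy = hedge k (j + dy)"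

definition corner_vedge :: "int \<Rightarrow> int \<Rightarrow> int \<Rightarrow> int \<Rightarrow> edge" where
  "corner_vedge k j dx dy = vedge (k + dx) j
      (if k + dx = 0 \<and> j < 0 then (if k < 0 then SL else SR) else Mid)"

definition corner_coef :: "complex \<Rightarrow> complex \<Rightarrow> complex" where
  "corner_coef v p = \<i> * complex_of_real (cmod (v - p)) / (v - p)"

definition strip_faces :: "int \<Rightarrow> int \<Rightarrow> (int \<times> int) set" where
  "strip_faces a b = {(k, j). a \<le> k \<and> k < b}"

definition left_bd :: "int \<Rightarrow> edge \<Rightarrow> bool" where
  "left_bd a e \<longleftrightarrow> (\<exists>y. e = vedge a y Mid) \<or> (\<exists>y. y < 0 \<and> e = vedge 0 y SR)"

definition right_bd :: "int \<Rightarrow> edge \<Rightarrow> bool" where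
  "right_bd b e \<longleftrightarrow> (\<exists>y. e = vedge b y Mid) \<or> (\<exists>y. y < 0 \<and> e = vedge 0 y SL)"

definition is_fermion :: "int \<Rightarrow> int \<Rightarrow> (edge \<Rightarrow> op) \<Rightarrow> (edge \<Rightarrow> op) \<Rightarrow> bool" where
  "is_fermion a b F Fs \<longleftrightarrow>
     (\<forall>e\<in>strip_edges a b. F e \<in> cliffgen a b \<and> Fs e \<in> cliffgen a b)
   \<and> (\<forall>k y. a \<le> k \<and> k < b \<longrightarrow>
        F (hedge k (int y)) = mmul a b (mpow a b (minv a b (Tmat a b)) y)
                                (mmul a b (psi a b k) (mpow a b (Tmat a b) y))
      \<and> Fs (hedge k (int y)) = mmul a b (mpow a b (minv a b (Tmat a b)) y)
                                (mmul a b (psis a b k) (mpow a b (Tmat a b) y))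
      \<and> F (hedge k (- int y)) = mmul a b (mpow a b (Tslit a b) y)
                                (mmul a b (psi a b k) (mpow a b (minv a b (Tslit a b)) y))
      \<and> Fs (hedge k (- int y)) = mmul a b (mpow a b (Tslit a b) y)
                                (mmul a b (psis a b k) (mpow a b (minv a b (Tslit a b)) y)))
   \<and> (\<forall>(k, j)\<in>strip_faces a b. \<forall>dx\<in>{0,1}. \<forall>dy\<in>{0,1}.
        let c = corner_coef (corner_vertex k j dx dy) (face_centre k j);
            h = corner_hedge k j dx dy; v = corner_vedge k j dx dy
        in oadd (F h) (osc c (Fs h)) = oadd (F v) (osc c (Fs v)))
   \<and> (\<forall>e\<in>strip_edges a b. left_bd a e \<longrightarrow> oadd (F e) (osc \<i> (Fs e)) = ozero)
   \<and> (\<forall>e\<in>strip_edges a b. right_bd b e \<longrightarrow> oadd (F e) (osc (- \<i>) (Fs e)) = ozero)"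

datatype region = RT | RL | RR

definition sub_edges :: "int \<Rightarrow> int \<Rightarrow> region \<Rightarrow> edge set" where
  "sub_edges a b r = (case r of
     RT \<Rightarrow> {hedge k y | k y. a \<le> k \<and> k < b \<and> 0 \<le> y}
          \<union> {vedge x y Mid | x y. a \<le> x \<and> x \<le> b \<and> 0 \<le> y}
   | RL \<Rightarrow> {hedge k y | k y. a \<le> k \<and> k < 0 \<and> y \<le> 0}
          \<union> {vedge x y (if x = 0 then SL else Mid) | x y. a \<le> x \<and> x \<le> 0 \<and> y < 0}
   | RR \<Rightarrow> {hedge k y | k y. 0 \<le> k \<and> k < b \<and> y \<le> 0}
          \<union> {vedge x y (if x = 0 then SR else Mid) | x y. 0 \<le> x \<and> x \<le> b \<and> y < 0})"

definition sub_faces :: "int \<Rightarrow> int \<Rightarrow> region \<Rightarrow> (int \<times> int) set" where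
  "sub_faces a b r = (case r of
     RT \<Rightarrow> {(k, j). a \<le> k \<and> k < b \<and> 0 \<le> j}
   | RL \<Rightarrow> {(k, j). a \<le> k \<and> k < 0 \<and> j < 0}
   | RR \<Rightarrow> {(k, j). 0 \<le> k \<and> k < b \<and> j < 0})"

definition ICSH :: "int \<Rightarrow> int \<Rightarrow> region \<Rightarrow> (edge \<Rightarrow> complex) \<Rightarrow> (edge \<Rightarrow> complex) \<Rightarrow> bool" where
  "ICSH a b r m ms \<longleftrightarrow>
     (\<forall>(k, j)\<in>sub_faces a b r. \<forall>dx\<in>{0,1}. \<forall>dy\<in>{0,1}.
        let c = corner_coef (corner_vertex k j dx dy) (face_centre k j);
            h = corner_hedge k j dx dy; v = corner_vedge k j dx dy
        in m h - c * ms h = m v - c * ms v)"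

definition ICRBV :: "int \<Rightarrow> int \<Rightarrow> region \<Rightarrow> (edge \<Rightarrow> complex) \<Rightarrow> (edge \<Rightarrow> complex) \<Rightarrow> bool" where
  "ICRBV a b r m ms \<longleftrightarrow>
     (\<forall>e\<in>sub_edges a b r. left_bd a e \<longrightarrow> m e - \<i> * ms e = 0)
   \<and> (\<forall>e\<in>sub_edges a b r. right_bd b e \<longrightarrow> m e + \<i> * ms e = 0)"

definition contour :: "int \<Rightarrow> int \<Rightarrow> region \<Rightarrow> int \<Rightarrow> complex list" where
  "contour a b r y = map (\<lambda>x. Complex (of_int x) (of_int y))
      (case r of RT \<Rightarrow> [a..b] | RL \<Rightarrow> [a..0] | RR \<Rightarrow> [0..b])"

text \<open>The contours consist of horizontal edges only, so the edge joining consecutive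
vertices w, w' is the (untagged) edge with midpoint (w+w')/2.\<close>

definition cint :: "complex list \<Rightarrow> (edge \<Rightarrow> complex) \<Rightarrow> (edge \<Rightarrow> complex)
                     \<Rightarrow> (edge \<Rightarrow> op) \<Rightarrow> (edge \<Rightarrow> op) \<Rightarrow> op" where
  "cint ws m ms F Fs = (\<lambda>\<tau> \<rho>. \<Sum>j\<in>{1..<length ws}.
      (let w0 = ws ! (j - 1); w1 = ws ! j; z = ((w0 + w1) / 2, Mid)
       in m z * (w1 - w0) * F z \<tau> \<rho> + ms z * cnj (w1 - w0) * Fs z \<tau> \<rho>))"

end

theory Submission
  imports Defs
begin

definition Eop :: "(edge \<Rightarrow> complex) \<Rightarrow> (edge \<Rightarrow> complex) \<Rightarrow> (edge \<Rightarrow> op) \<Rightarrow> (edge \<Rightarrow> op)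
   \<Rightarrow> (int \<Rightarrow> int) \<Rightarrow> (int \<Rightarrow> int) \<Rightarrow> edge \<Rightarrow> complex \<Rightarrow> complex" where
  "Eop m ms F Fs \<tau> \<rho> e d = m e * d * F e \<tau> \<rho> + ms e * cnj d * Fs e \<tau> \<rho>"

lemma cint_row:
  assumes "lo \<le> hi"
  shows "cint (map (\<lambda>x. Complex (of_int x) (of_int y)) [lo..hi]) m ms F Fs \<tau> \<rho>
       = (\<Sum>k\<in>{lo..<hi}. Eop m ms F Fs \<tau> \<rho> (hedge k y) 1)"
proof -
  let ?ws = "map (\<lambda>x. Complex (of_int x) (of_int y)) [lo..hi]"
  have len: "length ?ws = nat (hi - lo + 1)" by simp
  have nth: "?ws ! n = Complex (of_int (lo + int n)) (of_int y)" if "n < nat (hi - lo + 1)" for n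
    using that by (simp add: nth_upto)
  have trm: "(let w0 = ?ws ! (n - 1); w1 = ?ws ! n; z = ((w0 + w1) / 2, Mid)
       in m z * (w1 - w0) * F z \<tau> \<rho> + ms z * cnj (w1 - w0) * Fs z \<tau> \<rho>)
     = Eop m ms F Fs \<tau> \<rho> (hedge (lo + int n - 1) y) 1" if "n \<in> {1..<nat (hi - lo + 1)}" for n
  proof -
    have n1: "?ws ! (n - 1) = Complex (of_int (lo + int n - 1)) (of_int y)"
    proof -
      have e: "lo + int (n-1) = lo + int n - 1" using that by auto
      have lt: "n - 1 < nat (hi - lo + 1)" using that by auto
      have "?ws ! (n-1) = Complex (of_int (lo + int (n-1))) (of_int y)" by (rule nth[OF lt])
      then show ?thesis unfolding e .
    qed
    have n2: "?ws ! n = Complex (of_int (lo + int n)) (of_int y)" using that by (intro nth) auto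
    have d: "Complex (of_int (lo + int n)) (of_int y) - Complex (of_int (lo + int n - 1)) (of_int y) = 1"
      by (simp add: complex_eq_iff)
    have mid: "(Complex (of_int (lo + int n - 1)) (of_int y) + Complex (of_int (lo + int n)) (of_int y)) / 2
        = Complex (of_int (lo + int n - 1) + 1/2) (of_int y)"
      by (simp add: complex_eq_iff)
    show ?thesis unfolding n1 n2 d mid Let_def Eop_def hedge_def by simp
  qed
  have "cint ?ws m ms F Fs \<tau> \<rho> = (\<Sum>n\<in>{1..<nat (hi - lo + 1)}. Eop m ms F Fs \<tau> \<rho> (hedge (lo + int n - 1) y) 1)"
    unfolding cint_def len using trm by (intro sum.cong) auto
  also have "\<dots> = (\<Sum>k\<in>{lo..<hi}. Eop m ms F Fs \<tau> \<rho> (hedge k y) 1)"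
    by (rule sum.reindex_bij_witness[where i = "\<lambda>k. nat (k - lo + 1)" and j = "\<lambda>n. lo + int n - 1"]) auto
  finally show ?thesis .
qed

lemma div_helper: "Complex u v \<noteq> 0 \<Longrightarrow> A = B * Complex u v \<Longrightarrow> A / Complex u v = B"
  by (simp add: field_simps)

lemma coef:
  assumes "dx \<in> {0,1}" "dy \<in> {0,1}"
  shows "corner_coef (corner_vertex k j dx dy) (face_centre k j)
     = (if dx = 0 then (if dy = 0 then -(1+\<i>) else (1-\<i>)) else (if dy = 0 then (-1+\<i>) else (1+\<i>)))
       * (complex_of_real (sqrt 2) / 2)"
proof -
  have vp: "corner_vertex k j dx dy - face_centre k j = Complex (of_int dx - 1/2) (of_int dy - 1/2)"
    by (simp add: corner_vertex_def face_centre_def complex_eq_iff)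
  have h: "sqrt (2 * (1/2::real)^2) = sqrt 2 / 2"
  proof -
    have "sqrt (2 * (1/2::real)^2) = sqrt ((sqrt 2 / 2)^2)" by (simp add: power2_eq_square)
    also have "\<dots> = sqrt 2 / 2" by simp
    finally show ?thesis .
  qed
  have cm: "cmod (Complex (of_int dx - 1/2) (of_int dy - 1/2)) = sqrt 2 / 2"
    using assms h by (auto simp: cmod_def)
  have "\<i> * complex_of_real (sqrt 2 / 2) / Complex (of_int dx - 1/2) (of_int dy - 1/2)
     = (if dx = 0 then (if dy = 0 then -(1+\<i>) else (1-\<i>)) else (if dy = 0 then (-1+\<i>) else (1+\<i>)))
       * (complex_of_real (sqrt 2) / 2)"
    by (rule div_helper) (use assms in \<open>auto simp: complex_eq_iff\<close>)
  then show ?thesis unfolding corner_coef_def vp cm .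
qed

lemma face_poly:
  fixes s j c00 c10 c01 c11 mB mR mT mL nB nR nT nL fB fR fT fL gB gR gT gL :: complex
  assumes s2: "2 * (s * s) = 1" and j2: "j * j = -1"
    and "c00 = -(1+j)*s" "c10 = (-1+j)*s" "c01 = (1-j)*s" "c11 = (1+j)*s"
  shows "2 * (mB*fB + nB*gB + (mR*j*fR - nR*j*gR) - (mT*fT + nT*gT) - (mL*j*fL - nL*j*gL))
    = (1+j) * ((mB - c00*nB)*(fB + c00*gB) - (mL - c00*nL)*(fL + c00*gL))
    + (1-j) * ((mB - c10*nB)*(fB + c10*gB) - (mR - c10*nR)*(fR + c10*gR))
    + (-1-j) * ((mT - c11*nT)*(fT + c11*gT) - (mR - c11*nR)*(fR + c11*gR))
    + (-1+j) * ((mT - c01*nT)*(fT + c01*gT) - (mL - c01*nL)*(fL + c01*gL))"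
  using assms by algebra

lemma sub_strip_faces: "a < 0 \<Longrightarrow> 0 < b \<Longrightarrow> p \<in> sub_faces a b r \<Longrightarrow> p \<in> strip_faces a b"
  by (cases r) (auto simp: sub_faces_def strip_faces_def)

lemma face:
  assumes ab: "a < 0" "0 < b" and fer: "is_fermion a b F Fs" and ics: "ICSH a b r m ms"
    and kj: "(k,j) \<in> sub_faces a b r"
  shows "Eop m ms F Fs \<tau> \<rho> (hedge k j) 1 + Eop m ms F Fs \<tau> \<rho> (corner_vedge k j 1 0) \<i>
       - Eop m ms F Fs \<tau> \<rho> (hedge k (j+1)) 1 - Eop m ms F Fs \<tau> \<rho> (corner_vedge k j 0 0) \<i> = 0"
proof -
  have kj': "(k,j) \<in> strip_faces a b" using sub_strip_faces[OF ab kj] .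
  define c where "c dx dy = corner_coef (corner_vertex k j dx dy) (face_centre k j)" for dx dy
  have vd: "corner_vedge k j dx dy = corner_vedge k j dx 0" for dx dy
    by (simp add: corner_vedge_def)
  have hd0: "corner_hedge k j dx 0 = hedge k j" for dx by (simp add: corner_hedge_def)
  have hd1: "corner_hedge k j dx 1 = hedge k (j+1)" for dx by (simp add: corner_hedge_def)
  have M: "m (corner_hedge k j dx dy) - c dx dy * ms (corner_hedge k j dx dy)
        = m (corner_vedge k j dx 0) - c dx dy * ms (corner_vedge k j dx 0)"
    if "dx \<in> {0,1}" "dy \<in> {0,1}" for dx dy
    using ics kj that vd[of dx dy] unfolding ICSH_def c_def Let_def by fastforce
  have Fr: "F (corner_hedge k j dx dy) \<tau> \<rho> + c dx dy * Fs (corner_hedge k j dx dy) \<tau> \<rho>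
        = F (corner_vedge k j dx 0) \<tau> \<rho> + c dx dy * Fs (corner_vedge k j dx 0) \<tau> \<rho>"
    if "dx \<in> {0,1}" "dy \<in> {0,1}" for dx dy
  proof -
    have "oadd (F (corner_hedge k j dx dy)) (osc (c dx dy) (Fs (corner_hedge k j dx dy)))
        = oadd (F (corner_vedge k j dx dy)) (osc (c dx dy) (Fs (corner_vedge k j dx dy)))"
      using fer kj' that unfolding is_fermion_def c_def Let_def by fastforce
    then show ?thesis unfolding vd[of dx dy] oadd_def osc_def by meson
  qed
  define s where "s = complex_of_real (sqrt 2) / 2"
  have s2: "2 * (s * s) = 1" unfolding s_def
    by (simp add: field_simps flip: of_real_mult)
  have c00: "c 0 0 = -(1+\<i>)*s" and c10: "c 1 0 = (-1+\<i>)*s"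
    and c01: "c 0 1 = (1-\<i>)*s" and c11: "c 1 1 = (1+\<i>)*s"
    unfolding c_def s_def by (subst coef; simp)+
  have i2: "\<i> * \<i> = -1" by simp
  note P = face_poly[where mB = "m (hedge k j)" and nB = "ms (hedge k j)" and fB = "F (hedge k j) \<tau> \<rho>" and gB = "Fs (hedge k j) \<tau> \<rho>"
    and mT = "m (hedge k (j+1))" and nT = "ms (hedge k (j+1))" and fT = "F (hedge k (j+1)) \<tau> \<rho>" and gT = "Fs (hedge k (j+1)) \<tau> \<rho>"
    and mL = "m (corner_vedge k j 0 0)" and nL = "ms (corner_vedge k j 0 0)" and fL = "F (corner_vedge k j 0 0) \<tau> \<rho>" and gL = "Fs (corner_vedge k j 0 0) \<tau> \<rho>"
    and mR = "m (corner_vedge k j 1 0)" and nR = "ms (corner_vedge k j 1 0)" and fR = "F (corner_vedge k j 1 0) \<tau> \<rho>" and gR = "Fs (corner_vedge k j 1 0) \<tau> \<rho>", OF s2 i2 c00 c10 c01 c11]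
  have z: "2 * (m (hedge k j) * F (hedge k j) \<tau> \<rho> + ms (hedge k j) * Fs (hedge k j) \<tau> \<rho>
     + (m (corner_vedge k j 1 0) * \<i> * F (corner_vedge k j 1 0) \<tau> \<rho> - ms (corner_vedge k j 1 0) * \<i> * Fs (corner_vedge k j 1 0) \<tau> \<rho>)
     - (m (hedge k (j+1)) * F (hedge k (j+1)) \<tau> \<rho> + ms (hedge k (j+1)) * Fs (hedge k (j+1)) \<tau> \<rho>)
     - (m (corner_vedge k j 0 0) * \<i> * F (corner_vedge k j 0 0) \<tau> \<rho> - ms (corner_vedge k j 0 0) * \<i> * Fs (corner_vedge k j 0 0) \<tau> \<rho>)) = 0" (is "2 * ?X = 0")
    unfolding P
    using M[of 0 0] M[of 1 0] M[of 0 1] M[of 1 1] Fr[of 0 0] Fr[of 1 0] Fr[of 0 1] Fr[of 1 1]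
    unfolding hd0 hd1 by simp
  then have "?X = 0" by (subst (asm) mult_eq_0_iff) simp
  then show ?thesis unfolding Eop_def by (simp add: algebra_simps)
qed

lemma bdL:
  assumes fer: "is_fermion a b F Fs" and bv: "ICRBV a b r m ms"
    and e: "e \<in> sub_edges a b r" "e \<in> strip_edges a b" "left_bd a e"
  shows "Eop m ms F Fs \<tau> \<rho> e \<i> = 0"
proof -
  have "\<forall>e\<in>strip_edges a b. left_bd a e \<longrightarrow> oadd (F e) (osc \<i> (Fs e)) = ozero"
    using fer unfolding is_fermion_def by (elim conjE) assumption
  then have "oadd (F e) (osc \<i> (Fs e)) = ozero" using e by blast
  then have f: "F e \<tau> \<rho> = - \<i> * Fs e \<tau> \<rho>" unfolding oadd_def osc_def ozero_def
    by (simp add: eq_neg_iff_add_eq_0 fun_eq_iff)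
  have "m e - \<i> * ms e = 0" using bv e unfolding ICRBV_def by auto
  then have g: "m e = \<i> * ms e" by simp
  show ?thesis unfolding Eop_def f g by (simp add: algebra_simps)
qed

lemma bdR:
  assumes fer: "is_fermion a b F Fs" and bv: "ICRBV a b r m ms"
    and e: "e \<in> sub_edges a b r" "e \<in> strip_edges a b" "right_bd b e"
  shows "Eop m ms F Fs \<tau> \<rho> e \<i> = 0"
proof -
  have "\<forall>e\<in>strip_edges a b. right_bd b e \<longrightarrow> oadd (F e) (osc (-\<i>) (Fs e)) = ozero"
    using fer unfolding is_fermion_def by (elim conjE) assumption
  then have "oadd (F e) (osc (-\<i>) (Fs e)) = ozero" using e by blast
  then have f: "F e \<tau> \<rho> = \<i> * Fs e \<tau> \<rho>" unfolding oadd_def osc_def ozero_def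
    by (simp add: eq_neg_iff_add_eq_0 fun_eq_iff)
  have "m e + \<i> * ms e = 0" using bv e unfolding ICRBV_def by auto
  then have g: "m e = - \<i> * ms e" by (simp add: eq_neg_iff_add_eq_0)
  show ?thesis unfolding Eop_def f g by (simp add: algebra_simps)
qed

lemma telescope_int:
  fixes g :: "int \<Rightarrow> 'a::ab_group_add"
  assumes "lo \<le> hi"
  shows "(\<Sum>k\<in>{lo..<hi}. g (k+1) - g k) = g hi - g lo"
  using assms
proof (induction hi rule: int_ge_induct)
  case base then show ?case by simp
next
  case (step i)
  have "{lo..<i+1} = insert i {lo..<i}" using step.hyps by auto
  then show ?case using step by simp
qed

lemma row_step:
  assumes ab: "a < 0" "0 < b" and fer: "is_fermion a b F Fs" and ics: "ICSH a b r m ms"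
    and lh: "lo < hi"
    and faces: "\<And>k. lo \<le> k \<Longrightarrow> k < hi \<Longrightarrow> (k,j) \<in> sub_faces a b r"
    and chain: "\<And>k. lo \<le> k \<Longrightarrow> k + 1 < hi \<Longrightarrow> corner_vedge k j 1 0 = corner_vedge (k+1) j 0 0"
    and bl: "Eop m ms F Fs \<tau> \<rho> (corner_vedge lo j 0 0) \<i> = 0"
    and br: "Eop m ms F Fs \<tau> \<rho> (corner_vedge (hi-1) j 1 0) \<i> = 0"
  shows "(\<Sum>k\<in>{lo..<hi}. Eop m ms F Fs \<tau> \<rho> (hedge k j) 1) = (\<Sum>k\<in>{lo..<hi}. Eop m ms F Fs \<tau> \<rho> (hedge k (j+1)) 1)"
proof -
  let ?E = "Eop m ms F Fs \<tau> \<rho>"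
  define g where "g x = (if x = hi then ?E (corner_vedge (hi-1) j 1 0) \<i> else ?E (corner_vedge x j 0 0) \<i>)" for x
  have R: "?E (corner_vedge k j 1 0) \<i> = g (k+1)" if "lo \<le> k" "k < hi" for k
    using that chain[of k] unfolding g_def by auto
  have "(\<Sum>k\<in>{lo..<hi}. ?E (hedge k j) 1 - ?E (hedge k (j+1)) 1 + (g (k+1) - g k)) = 0"
  proof (rule sum.neutral, rule ballI)
    fix k assume k: "k \<in> {lo..<hi}"
    have "g k = ?E (corner_vedge k j 0 0) \<i>" using k unfolding g_def by auto
    then show "?E (hedge k j) 1 - ?E (hedge k (j+1)) 1 + (g (k+1) - g k) = 0"
      using face[OF ab fer ics faces, of k \<tau> \<rho>] R[of k] k by (simp add: algebra_simps)
  qed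
  moreover have "(\<Sum>k\<in>{lo..<hi}. ?E (hedge k j) 1 - ?E (hedge k (j+1)) 1 + (g (k+1) - g k))
     = (\<Sum>k\<in>{lo..<hi}. ?E (hedge k j) 1) - (\<Sum>k\<in>{lo..<hi}. ?E (hedge k (j+1)) 1) + (g hi - g lo)"
    using telescope_int[of lo hi g] lh by (simp add: sum.distrib sum_subtractf)
  moreover have "g hi = 0" "g lo = 0" using bl br lh unfolding g_def by auto
  ultimately show ?thesis by simp
qed

lemma ve_strip: "a \<le> x \<Longrightarrow> x \<le> b \<Longrightarrow> \<not> (x = 0 \<and> y < 0) \<Longrightarrow> vedge x y Mid \<in> strip_edges a b"
  unfolding strip_edges_def by blast

lemma ve_strip0: "y < 0 \<Longrightarrow> s \<in> {SL, SR} \<Longrightarrow> vedge 0 y s \<in> strip_edges a b"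
  unfolding strip_edges_def by blast

theorem proposition3p20:
  fixes a b y :: int and r :: region
    and m ms :: "edge \<Rightarrow> complex" and F Fs :: "edge \<Rightarrow> op"
  assumes "a < 0" and "0 < b"
    and "is_fermion a b F Fs"
    and "ICSH a b r m ms" and "ICRBV a b r m ms"
    and "r = RT \<longrightarrow> 0 \<le> y" and "r \<noteq> RT \<longrightarrow> y \<le> 0"
  shows "cint (contour a b r y) m ms F Fs = cint (contour a b r 0) m ms F Fs"
proof (rule ext, rule ext)
  fix \<tau> \<rho>
  note ab = assms(1,2) and fer = assms(3) and ics = assms(4) and bv = assms(5)
  define lo where "lo = (case r of RT \<Rightarrow> a | RL \<Rightarrow> a | RR \<Rightarrow> 0)"
  define hi where "hi = (case r of RT \<Rightarrow> b | RL \<Rightarrow> 0 | RR \<Rightarrow> b)"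
  have lh: "lo < hi" using ab by (cases r) (simp_all add: lo_def hi_def)
  have cont: "contour a b r y' = map (\<lambda>x. Complex (of_int x) (of_int y')) [lo..hi]" for y'
    by (cases r) (simp_all add: contour_def lo_def hi_def)
  define R where "R j = (\<Sum>k\<in>{lo..<hi}. Eop m ms F Fs \<tau> \<rho> (hedge k j) 1)" for j
  have ce: "cint (contour a b r y') m ms F Fs \<tau> \<rho> = R y'" for y'
    unfolding cont R_def using lh by (intro cint_row) simp
  have step: "R j = R (j+1)" if j: "r = RT \<longrightarrow> 0 \<le> j" "r \<noteq> RT \<longrightarrow> j < 0" for j
    unfolding R_def
  proof (rule row_step[OF ab fer ics lh])
    show "(k, j) \<in> sub_faces a b r" if "lo \<le> k" "k < hi" for k
      using that j ab by (cases r) (auto simp: sub_faces_def lo_def hi_def)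
    show "corner_vedge k j 1 0 = corner_vedge (k + 1) j 0 0" if "lo \<le> k" "k + 1 < hi" for k
      using that j ab by (cases r) (auto simp: corner_vedge_def lo_def hi_def)
    show "Eop m ms F Fs \<tau> \<rho> (corner_vedge lo j 0 0) \<i> = 0"
    proof (rule bdL[OF fer bv])
      show "corner_vedge lo j 0 0 \<in> sub_edges a b r"
        using j ab
      proof (cases r)
        case RT then show ?thesis using j ab
          by (simp add: sub_edges_def corner_vedge_def lo_def) (rule disjI2, rule exI[of _ a], auto)
      next
        case RL then show ?thesis using j ab
          by (simp add: sub_edges_def corner_vedge_def lo_def) (rule disjI2, rule exI[of _ a], auto)
      next
        case RR then show ?thesis using j ab
          by (auto simp: sub_edges_def corner_vedge_def lo_def)
      qed
      show "corner_vedge lo j 0 0 \<in> strip_edges a b"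
        using j ab by (cases r) (auto simp: corner_vedge_def lo_def intro!: ve_strip ve_strip0)
      show "left_bd a (corner_vedge lo j 0 0)"
        using j ab by (cases r) (auto simp: left_bd_def corner_vedge_def lo_def)
    qed
    show "Eop m ms F Fs \<tau> \<rho> (corner_vedge (hi - 1) j 1 0) \<i> = 0"
    proof (rule bdR[OF fer bv])
      show "corner_vedge (hi - 1) j 1 0 \<in> sub_edges a b r"
        using j ab
      proof (cases r)
        case RT then show ?thesis using j ab
          by (simp add: sub_edges_def corner_vedge_def hi_def) (rule disjI2, rule exI[of _ b], auto)
      next
        case RR then show ?thesis using j ab
          by (simp add: sub_edges_def corner_vedge_def hi_def) (rule disjI2, rule exI[of _ b], auto)
      next
        case RL then show ?thesis using j ab
          by (auto simp: sub_edges_def corner_vedge_def hi_def)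
      qed
      show "corner_vedge (hi - 1) j 1 0 \<in> strip_edges a b"
        using j ab by (cases r) (auto simp: corner_vedge_def hi_def intro!: ve_strip ve_strip0)
      show "right_bd b (corner_vedge (hi - 1) j 1 0)"
        using j ab by (cases r) (auto simp: right_bd_def corner_vedge_def hi_def)
    qed
  qed
  have "R y = R 0"
  proof (cases "r = RT")
    case True
    then have y0: "0 \<le> y" using assms(6) by simp
    have "R (int n) = R 0" for n
    proof (induction n)
      case 0 then show ?case by simp
    next
      case (Suc n)
      have "R (int n) = R (int n + 1)" using step[of "int n"] True by simp
      then show ?case using Suc by (simp add: add.commute)
    qed
    from this[of "nat y"] y0 show ?thesis by simp
  next
    case False
    then have y0: "y \<le> 0" using assms(7) by simp
    have "R (- int n) = R 0" for n
    proof (induction n)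
      case 0 then show ?case by simp
    next
      case (Suc n)
      have "R (- int (Suc n)) = R (- int (Suc n) + 1)" using step[of "- int (Suc n)"] False by simp
      then show ?case using Suc by simp
    qed
    from this[of "nat (-y)"] y0 show ?thesis by simp
  qed
  then show "cint (contour a b r y) m ms F Fs \<tau> \<rho> = cint (contour a b r 0) m ms F Fs \<tau> \<rho>"
    using ce by simp
qed

end
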